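(* Let $\mathfrak{g}$ be a finite-dimensional complex Lie algebra and let $a\in\mathfrak{g}^*$ be regular. Then the algebra of shifts of semi-invariants $\mathcal{F}^{\mathrm{si}}_a$ is commutative with respect to both the Lie–Poisson bracket $\{\cdot,\cdot\}$ and the frozen argument bracket $\{\cdot,\cdot\}_a$.
   Context: $S(\mathfrak{g})$ is identified with polynomial functions on $\mathfrak{g}^*$; $df(x)\in\mathfrak{g}\simeq T^*_x\mathfrak{g}^*$. Lie–Poisson bracket: $\{f,h\}(x)=\langle x,[df(x),dh(x)]\rangle$; frozen argument bracket: $\{f,h\}_a(x)=\langle a,[df(x),dh(x)]\rangle$. $\mathfrak{g}_x=\{\xi\in\mathfrak{g}\mid \operatorname{ad}^*_\xi x=0\}$, $\operatorname{ind}\mathfrak{g}=\min_x\dim\mathfrak{g}_x$, $a$ regular means $\dim\mathfrak{g}_a=\operatorname{ind}\mathfrak{g}$. Algebra of shifts $\mathcal{F}_a$: choose $m=\operatorname{ind}\mathfrak{g}$ local analytic invariants $f_1,\dots,f_m$ of the coadjoint representation near $a$ with $df_i(a)$ a basis of $\mathfrak{g}_a$; expand $f_i(a+\lambda x)=\sum_{j\ge0}f_{ij}(x)\lambda^j$; $\mathcal{F}_a$ is generated by all $f_{ij}$, $j>0$. A nonzero $g\in S(\mathfrak{g})$ is a semi-invariant with weight $\chi_g\in\mathfrak{g}^*$ if $\{f,g\}(x)=\chi_g(df(x))g(x)$ for all $f\in S(\mathfrak{g})$. $\mathcal{F}^{\mathrm{si}}_a$ is the subalgebra of $S(\mathfrak{g})$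 generated by $\mathcal{F}_a$ and all functions $x\mapsto g(x+\lambda a)$ for all semi-invariants $g$ and all $\lambda\in\mathbb{C}$. *)

theory Defs
  imports "HOL-Analysis.Analysis"
begin

text \<open>A finite-dimensional complex Lie algebra is modelled as complex^'n with a
bracket; its dual g^* is identified with complex^'n via the coordinate pairing.\<close>

definition pair :: "complex^'n \<Rightarrow> complex^'n \<Rightarrow> complex" where
  "pair x \<xi> = (\<Sum>i\<in>UNIV. x$i * \<xi>$i)"

definition lie_algebra :: "(complex^'n \<Rightarrow> complex^'n \<Rightarrow> complex^'n) \<Rightarrow> bool" where
  "lie_algebra br \<longleftrightarrow>
     (\<forall>x y z. br (x + y) z = br x z + br y z) \<and>
     (\<forall>c x y. br (c *s x) y = c *s br x y) \<and>
     (\<forall>x y. br x y = - br y x) \<and>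
     (\<forall>x y z. br x (br y z) + br y (br z x) + br z (br x y) = 0)"

definition stab :: "(complex^'n \<Rightarrow> complex^'n \<Rightarrow> complex^'n) \<Rightarrow> complex^'n \<Rightarrow> (complex^'n) set" where
  "stab br x = {\<xi>. \<forall>\<eta>. pair x (br \<xi> \<eta>) = 0}"

definition lie_index :: "(complex^'n \<Rightarrow> complex^'n \<Rightarrow> complex^'n) \<Rightarrow> nat" where
  "lie_index br = (LEAST d. \<exists>x. vec.dim (stab br x) = d)"

definition regular :: "(complex^'n \<Rightarrow> complex^'n \<Rightarrow> complex^'n) \<Rightarrow> complex^'n \<Rightarrow> bool" where
  "regular br a \<longleftrightarrow> vec.dim (stab br a) = lie_index br"

definition dF :: "(complex^'n \<Rightarrow> complex) \<Rightarrow> complex^'n \<Rightarrow> complex^'n" where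
  "dF f x = (\<chi> i. frechet_derivative f (at x) (axis i 1))"

definition lie_poisson :: "(complex^'n \<Rightarrow> complex^'n \<Rightarrow> complex^'n) \<Rightarrow>
    (complex^'n \<Rightarrow> complex) \<Rightarrow> (complex^'n \<Rightarrow> complex) \<Rightarrow> complex^'n \<Rightarrow> complex" where
  "lie_poisson br f h x = pair x (br (dF f x) (dF h x))"

definition frozen_bracket :: "(complex^'n \<Rightarrow> complex^'n \<Rightarrow> complex^'n) \<Rightarrow> complex^'n \<Rightarrow>
    (complex^'n \<Rightarrow> complex) \<Rightarrow> (complex^'n \<Rightarrow> complex) \<Rightarrow> complex^'n \<Rightarrow> complex" where
  "frozen_bracket br a f h x = pair a (br (dF f x) (dF h x))"

inductive poly_fun :: "(complex^'n \<Rightarrow> complex) \<Rightarrow> bool" where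
  pf_const: "poly_fun (\<lambda>x. c)"
| pf_coord: "poly_fun (\<lambda>x. x$i)"
| pf_add: "poly_fun f \<Longrightarrow> poly_fun g \<Longrightarrow> poly_fun (\<lambda>x. f x + g x)"
| pf_mult: "poly_fun f \<Longrightarrow> poly_fun g \<Longrightarrow> poly_fun (\<lambda>x. f x * g x)"

inductive_set gen_alg :: "((complex^'n \<Rightarrow> complex) set) \<Rightarrow> (complex^'n \<Rightarrow> complex) set"
  for G where
  ga_gen: "f \<in> G \<Longrightarrow> f \<in> gen_alg G"
| ga_const: "(\<lambda>x. c) \<in> gen_alg G"
| ga_add: "f \<in> gen_alg G \<Longrightarrow> g \<in> gen_alg G \<Longrightarrow> (\<lambda>x. f x + g x) \<in> gen_alg G"
| ga_mult: "f \<in> gen_alg G \<Longrightarrow> g \<in> gen_alg G \<Longrightarrow> (\<lambda>x. f x * g x) \<in> gen_alg G"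

definition holo_on :: "(complex^'n \<Rightarrow> complex) \<Rightarrow> (complex^'n) set \<Rightarrow> bool" where
  "holo_on f U \<longleftrightarrow> (\<forall>x\<in>U. \<exists>L. (f has_derivative L) (at x) \<and> (\<forall>c v. L (c *s v) = c * L v))"

text \<open>Local analytic invariant of the coadjoint representation on an open neighbourhood U
(infinitesimal invariance: df(x) lies in g_x).\<close>
definition local_invariant :: "(complex^'n \<Rightarrow> complex^'n \<Rightarrow> complex^'n) \<Rightarrow>
    (complex^'n \<Rightarrow> complex) \<Rightarrow> (complex^'n) set \<Rightarrow> bool" where
  "local_invariant br f U \<longleftrightarrow> open U \<and> holo_on f U \<and> (\<forall>x\<in>U. dF f x \<in> stab br x)"

definition shift_coeff :: "(complex^'n \<Rightarrow> complex) \<Rightarrow> complex^'n \<Rightarrow> nat \<Rightarrow> complex^'n \<Rightarrow> complex" where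
  "shift_coeff f a j x = (deriv ^^ j) (\<lambda>t. f (a + t *s x)) 0 / fact j"

definition semi_invariant :: "(complex^'n \<Rightarrow> complex^'n \<Rightarrow> complex^'n) \<Rightarrow> (complex^'n \<Rightarrow> complex) \<Rightarrow> bool" where
  "semi_invariant br g \<longleftrightarrow> poly_fun g \<and> (\<exists>x. g x \<noteq> 0) \<and>
     (\<exists>w. \<forall>f. poly_fun f \<longrightarrow> (\<forall>x. lie_poisson br f g x = pair w (dF f x) * g x))"

definition shifts_alg :: "(nat \<Rightarrow> complex^'n \<Rightarrow> complex) \<Rightarrow> nat \<Rightarrow> complex^'n \<Rightarrow> (complex^'n \<Rightarrow> complex) set" where
  "shifts_alg f m a = gen_alg {shift_coeff (f i) a j | i j. i < m \<and> j > 0}"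

definition shifts_si_alg :: "(complex^'n \<Rightarrow> complex^'n \<Rightarrow> complex^'n) \<Rightarrow>
    (nat \<Rightarrow> complex^'n \<Rightarrow> complex) \<Rightarrow> nat \<Rightarrow> complex^'n \<Rightarrow> (complex^'n \<Rightarrow> complex) set" where
  "shifts_si_alg br f m a = gen_alg ({shift_coeff (f i) a j | i j. i < m \<and> j > 0} \<union>
      {(\<lambda>x. g (x + t *s a)) | g t. semi_invariant br g})"

end

theory Submission
  imports Defs "HOL-Complex_Analysis.Complex_Analysis"
begin


no_notation fps_nth (infixl \<open>$\<close> 75)

lemma pair_add1: "pair (x + y) v = pair x v + pair y v"
  unfolding pair_def by (simp add: distrib_right sum.distrib)
lemma pair_scale1: "pair (c *s x) v = c * pair x v"
  unfolding pair_def by (simp add: sum_distrib_left mult.assoc)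
lemma pair_add2: "pair x (v + w) = pair x v + pair x w"
  unfolding pair_def by (simp add: distrib_left sum.distrib)
lemma pair_scale2: "pair x (c *s v) = c * pair x v"
  unfolding pair_def by (simp add: sum_distrib_left algebra_simps)
lemma pair_neg2: "pair x (- v) = - pair x v"
  unfolding pair_def by (simp add: sum_negf)
lemma pair_zero2[simp]: "pair x 0 = 0"
  unfolding pair_def by simp
lemma pair_zero1[simp]: "pair 0 x = 0"
  unfolding pair_def by simp
lemma pair_sum2: "pair x (sum f S) = (\<Sum>q\<in>S. pair x (f q))"
  unfolding pair_def by (simp add: sum_distrib_left sum.swap[of _ S])
lemma pair_axis1: "pair (axis p 1) v = v $ p"
proof -
  have "pair (axis p 1) v = (\<Sum>i\<in>UNIV. if i = p then v $ i else 0)"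
    unfolding pair_def by (intro sum.cong) (auto simp: axis_def)
  then show ?thesis by simp
qed
lemma pair_comm: "pair x v = pair v x"
  unfolding pair_def by (simp add: mult.commute)

section \<open>Lie algebra\<close>

locale lie = fixes br :: "complex^'n \<Rightarrow> complex^'n \<Rightarrow> complex^'n"
  assumes la: "lie_algebra br"
begin
lemma add1: "br (x + y) z = br x z + br y z" using la unfolding lie_algebra_def by blast
lemma scale1: "br (c *s x) y = c *s br x y" using la unfolding lie_algebra_def by blast
lemma anti: "br x y = - br y x" using la unfolding lie_algebra_def by blast
lemma add2: "br z (x + y) = br z x + br z y"
  by (metis add1 anti minus_add_distrib)
lemma scale2: "br y (c *s x) = c *s br y x"
  by (metis anti scale1 vector_smult_rneg)
lemma zero1[simp]: "br 0 y = 0" using scale1[of 0 y y] by simp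
lemma zero2[simp]: "br y 0 = 0" using scale2[of y 0 y] by simp
lemma self0[simp]: "br x x = 0"
proof -
  have "br x x = - br x x" by (rule anti)
  then have "2 *s br x x = 0" by (metis add.right_inverse scalar_mult_eq_scaleR
     vector_sadd_rdistrib one_add_one vector_smult_lid)
  then show ?thesis by (simp add: vec_eq_iff)
qed
lemma sum2: "br u (sum f S) = (\<Sum>q\<in>S. br u (f q))"
  by (induction S rule: infinite_finite_induct) (auto simp: add2)
lemma sum1: "br (sum f S) u = (\<Sum>q\<in>S. br (f q) u)"
  by (induction S rule: infinite_finite_induct) (auto simp: add1)

lemma expand2: "pair z (br u v) = (\<Sum>q\<in>UNIV. v $ q * pair z (br u (axis q 1)))"
proof -
  have "pair z (br u v) = pair z (br u (\<Sum>q\<in>UNIV. (v$q) *s axis q 1))"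
    by (simp add: basis_expansion)
  also have "\<dots> = (\<Sum>q\<in>UNIV. v $ q * pair z (br u (axis q 1)))"
    by (simp add: sum2 pair_sum2 scale2 pair_scale2)
  finally show ?thesis .
qed
lemma expand1: "pair z (br u v) = (\<Sum>q\<in>UNIV. u $ q * pair z (br (axis q 1) v))"
proof -
  have "pair z (br u v) = pair z (br (\<Sum>q\<in>UNIV. (u$q) *s axis q 1) v)"
    by (simp add: basis_expansion)
  also have "\<dots> = (\<Sum>q\<in>UNIV. u $ q * pair z (br (axis q 1) v))"
    by (simp add: sum1 pair_sum2 scale1 pair_scale2)
  finally show ?thesis .
qed
lemma pair_anti: "pair z (br u v) = - pair z (br v u)"
  by (metis anti pair_neg2)
end

section \<open>complex linear derivatives\<close>

lemma clinear_expand: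
  assumes "linear L" "\<And>c v. L (c *s v) = c * L (v::complex^'n)"
  shows "L v = pair v (\<chi> p. L (axis p 1))"
proof -
  have "L v = L (\<Sum>q\<in>UNIV. (v$q) *s axis q 1)" by (simp add: basis_expansion)
  also have "\<dots> = (\<Sum>q\<in>UNIV. L ((v$q) *s axis q 1))" by (simp add: linear_sum[OF assms(1)])
  also have "\<dots> = pair v (\<chi> p. L (axis p 1))" unfolding pair_def by (simp add: assms(2))
  finally show ?thesis .
qed

lemma dF_eq:
  assumes "(f has_derivative (\<lambda>v. pair v D)) (at x)"
  shows "dF f x = D"
proof -
  have "frechet_derivative f (at x) = (\<lambda>v. pair v D)" using frechet_derivative_at[OF assms] by simp
  then show ?thesis unfolding dF_def by (simp add: pair_axis1 vec_eq_iff)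
qed

lemma has_derivative_pair_linear:
  fixes \<zeta> :: "complex^'n"
  shows "((\<lambda>z. pair z \<zeta>) has_derivative (\<lambda>v. pair v \<zeta>)) (at x)"
proof -
  have "bounded_linear (\<lambda>z::complex^'n. pair z \<zeta>)"
    unfolding pair_def by (intro bounded_linear_sum bounded_linear_mult_const bounded_linear_vec_nth)
  then show ?thesis by (rule bounded_linear_imp_has_derivative)
qed



lemma bl_smul: "bounded_linear (\<lambda>s::complex. s *s (w::complex^'n))"
  by (rule linear_conv_bounded_linear[THEN iffD1])
     (auto simp: linear_iff vec_eq_iff algebra_simps vector_scaleR_component)

lemma line_deriv:
  fixes w :: "complex^'n"
  assumes "(f has_derivative (\<lambda>v. pair v D)) (at (y + s *s w))"
  shows "((\<lambda>s. f (y + s *s w)) has_field_derivative pair w D) (at s)"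
proof -
  have l: "((\<lambda>s. y + s *s w) has_derivative (\<lambda>d. d *s w)) (at s)"
    using bl_smul[of w] by (auto intro!: derivative_eq_intros bounded_linear_imp_has_derivative)
  have "((\<lambda>s. f (y + s *s w)) has_derivative (\<lambda>d. pair (d *s w) D)) (at s)"
    using has_derivative_compose[OF l assms] by (simp add: o_def)
  then show ?thesis unfolding has_field_derivative_def
    by (simp add: pair_scale1 mult.commute[of _ "pair w D"])
qed

lemma poly_fun_cmult: "poly_fun f \<Longrightarrow> poly_fun (\<lambda>z. c * f z)"
  using pf_mult[OF pf_const] by blast
lemma poly_fun_sum: "finite S \<Longrightarrow> (\<And>q. q \<in> S \<Longrightarrow> poly_fun (f q)) \<Longrightarrow> poly_fun (\<lambda>z. \<Sum>q\<in>S. f q z)"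
  by (induction S rule: finite_induct) (auto intro: pf_const pf_add)
lemma poly_fun_pair: "poly_fun (\<lambda>z. pair z \<zeta>)"
  unfolding pair_def by (intro poly_fun_sum) (auto intro!: pf_mult pf_coord pf_const)

lemma poly_deriv_ex:
  assumes "poly_fun f"
  shows "\<exists>D. (\<forall>p. poly_fun (\<lambda>z. D z $ p)) \<and> (\<forall>z. (f has_derivative (\<lambda>v. pair v (D z))) (at z))"
  using assms
proof induction
  case (pf_const c)
  show ?case using poly_fun.pf_const[of 0] by (intro exI[of _ "\<lambda>z. 0"]) auto
next
  case (pf_coord i)
  have "((\<lambda>x. x $ i) has_derivative (\<lambda>v. pair v (axis i 1))) (at z)" for z
    using bounded_linear_imp_has_derivative[OF bounded_linear_vec_nth[of i]]
    by (simp add: pair_comm[of _ "axis i 1"] pair_axis1)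
  then show ?case by (intro exI[of _ "\<lambda>z. axis i 1"]) (auto intro: poly_fun.pf_const)
next
  case (pf_add f g)
  then obtain D1 D2 where "\<forall>p. poly_fun (\<lambda>z. D1 z $ p)" "\<forall>z. (f has_derivative (\<lambda>v. pair v (D1 z))) (at z)"
     "\<forall>p. poly_fun (\<lambda>z. D2 z $ p)" "\<forall>z. (g has_derivative (\<lambda>v. pair v (D2 z))) (at z)" by blast
  then show ?case
    by (intro exI[of _ "\<lambda>z. D1 z + D2 z"]) (auto intro!: poly_fun.pf_add derivative_eq_intros simp: pair_add2)
next
  case (pf_mult f g)
  then obtain D1 D2 where "\<forall>p. poly_fun (\<lambda>z. D1 z $ p)" "\<forall>z. (f has_derivative (\<lambda>v. pair v (D1 z))) (at z)"
     "\<forall>p. poly_fun (\<lambda>z. D2 z $ p)" "\<forall>z. (g has_derivative (\<lambda>v. pair v (D2 z))) (at z)" by blast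
  note h = this
  have "((\<lambda>z. f z * g z) has_derivative (\<lambda>v. pair v (f z *s D2 z + g z *s D1 z))) (at z)" for z
  proof -
    have "((\<lambda>z. f z * g z) has_derivative (\<lambda>v. f z * pair v (D2 z) + pair v (D1 z) * g z)) (at z)"
      by (rule has_derivative_mult) (use h in auto)
    moreover have "(\<lambda>v. f z * pair v (D2 z) + pair v (D1 z) * g z) = (\<lambda>v. pair v (f z *s D2 z + g z *s D1 z))"
      by (auto simp: pair_add2 pair_scale2 algebra_simps)
    ultimately show ?thesis by simp
  qed
  moreover have "poly_fun (\<lambda>z. (f z *s D2 z + g z *s D1 z) $ p)" for p
    using h pf_mult.hyps by (auto intro!: poly_fun.pf_add poly_fun.pf_mult)
  ultimately show ?case by (intro exI[of _ "\<lambda>z. f z *s D2 z + g z *s D1 z"]) blast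
qed

lemma poly_has_deriv: "poly_fun f \<Longrightarrow> (f has_derivative (\<lambda>v. pair v (dF f z))) (at z)"
  using poly_deriv_ex dF_eq by metis

lemma poly_dF: "poly_fun f \<Longrightarrow> poly_fun (\<lambda>z. dF f z $ p)"
proof -
  assume "poly_fun f"
  then obtain D where "\<forall>p. poly_fun (\<lambda>z. D z $ p)" "\<forall>z. (f has_derivative (\<lambda>v. pair v (D z))) (at z)"
    using poly_deriv_ex by blast
  then have "dF f z = D z" for z using dF_eq by blast
  then show ?thesis using \<open>\<forall>p. poly_fun (\<lambda>z. D z $ p)\<close> by simp
qed

lemma poly_cont: "poly_fun f \<Longrightarrow> continuous_on S f"
  by (meson continuous_at_imp_continuous_on has_derivative_continuous poly_has_deriv)

lemma poly_line: "poly_fun q \<Longrightarrow> \<exists>P. \<forall>s. q (c + s *s v) = poly P s"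
proof (induction rule: poly_fun.induct)
  case (pf_const c)
  then show ?case by (intro exI[of _ "[:c:]"]) auto
next
  case (pf_coord i)
  then show ?case by (intro exI[of _ "[:c$i, v$i:]"]) (auto simp: algebra_simps)
next
  case (pf_add f g)
  then obtain P Q where "\<forall>s. f (c + s *s v) = poly P s" "\<forall>s. g (c + s *s v) = poly Q s" by blast
  then show ?case by (intro exI[of _ "P + Q"]) auto
next
  case (pf_mult f g)
  then obtain P Q where "\<forall>s. f (c + s *s v) = poly P s" "\<forall>s. g (c + s *s v) = poly Q s" by blast
  then show ?case by (intro exI[of _ "P * Q"]) auto
qed

lemma norm_smult_vec: "norm (s *s (v::complex^'n)) = norm s * norm v"
proof -
  have "norm (s *s v) = sqrt (\<Sum>i\<in>UNIV. (norm s)^2 * (norm (v$i))^2)"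
    unfolding norm_vec_def L2_set_def by (simp add: norm_mult power_mult_distrib)
  also have "\<dots> = sqrt ((norm s)^2 * (\<Sum>i\<in>UNIV. (norm (v$i))^2))"
    by (simp add: sum_distrib_left)
  also have "\<dots> = norm s * norm v"
    unfolding norm_vec_def L2_set_def by (simp add: real_sqrt_mult)
  finally show ?thesis .
qed

lemma poly_zero_ball:
  assumes "poly_fun p" "e > 0" "\<And>z. z \<in> ball z0 e \<Longrightarrow> p z = 0"
  shows "p z = 0"
proof (cases "z = z0")
  case True then show ?thesis using assms by auto
next
  case False
  obtain P where P: "\<forall>s. p (z0 + s *s (z - z0)) = poly P s" using poly_line[OF assms(1)] by blast
  define d where "d = e / norm (z - z0)"
  have d: "d > 0" using False assms(2) by (simp add: d_def)
  have "poly P s = 0" if "s \<in> ball 0 d" for s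
  proof -
    have "norm (s *s (z - z0)) = norm s * norm (z - z0)" by (rule norm_smult_vec)
    also have "\<dots> < e"
      using that False by (simp add: d_def pos_less_divide_eq)
    finally have "norm (s *s (z - z0)) < e" .
    then have "z0 + s *s (z - z0) \<in> ball z0 e" by (simp add: dist_norm del: vector_ssub_ldistrib)
    then show ?thesis using P assms(3) by metis
  qed
  then have "ball 0 d \<subseteq> {s. poly P s = 0}" by auto
  moreover have "infinite (ball (0::complex) d)"
    using islimpt_eq_infinite_ball[of 0 UNIV] d by auto
  ultimately have "P = 0" using poly_roots_finite finite_subset by blast
  then show ?thesis using P[rule_format, of 1] by simp
qed

lemma poly_domain:
  assumes "poly_fun p" "poly_fun q" "\<And>z. p z * q z = 0" "q z0 \<noteq> 0"
  shows "p z = 0"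
proof -
  have "continuous_on UNIV q" by (rule poly_cont[OF assms(2)])
  then obtain e where e: "e > 0" "\<And>z. dist z z0 < e \<Longrightarrow> q z \<noteq> 0"
  proof -
    obtain d where d: "d > 0" "\<forall>z. dist z z0 < d \<longrightarrow> dist (q z) (q z0) < norm (q z0)"
      using \<open>continuous_on UNIV q\<close> assms(4) unfolding continuous_on_iff
      by (metis UNIV_I zero_less_norm_iff)
    have "q z \<noteq> 0" if "dist z z0 < d" for z
      using d(2) that by (metis dist_0_norm dist_commute order_less_irrefl)
    then show ?thesis using that d(1) by blast
  qed
  show ?thesis
  proof (rule poly_zero_ball[OF assms(1) e(1), of z0])
    fix z' assume "z' \<in> ball z0 e"
    then have "q z' \<noteq> 0" using e(2) by (simp add: dist_commute)
    then show "p z' = 0" using assms(3)[of z'] by simp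
  qed
qed



definition wt :: "(complex^'n \<Rightarrow> complex^'n \<Rightarrow> complex^'n) \<Rightarrow> (complex^'n \<Rightarrow> complex) \<Rightarrow> complex^'n \<Rightarrow> bool" where
  "wt br g w \<longleftrightarrow> (\<forall>f. poly_fun f \<longrightarrow> (\<forall>x. lie_poisson br f g x = pair w (dF f x) * g x))"

lemma si_wt: "semi_invariant br g \<Longrightarrow> \<exists>w. wt br g w"
  unfolding semi_invariant_def wt_def by blast

lemma dF_pair_linear: "dF (\<lambda>z. pair z \<zeta>) x = \<zeta>"
  by (rule dF_eq[OF has_derivative_pair_linear])

lemma si_lin: "wt br g w \<Longrightarrow> pair x (br \<zeta> (dF g x)) = pair w \<zeta> * g x"
  unfolding wt_def lie_poisson_def
  using poly_fun_pair[of \<zeta>] by (metis dF_pair_linear)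

lemma poly_fun_pair_dF: "poly_fun f \<Longrightarrow> poly_fun (\<lambda>z. pair w (dF f z))"
  unfolding pair_def by (intro poly_fun_sum) (auto intro!: poly_fun_cmult poly_dF)

lemma has_derivative_shift:
  assumes "(f has_derivative D) (at (x + c))"
  shows "((\<lambda>y. f (y + c)) has_derivative D) (at x)"
proof -
  have "((\<lambda>y. y + c) has_derivative (\<lambda>y. y)) (at x)" by (auto intro!: derivative_eq_intros)
  from has_derivative_compose[OF this assms] show ?thesis by (simp add: o_def)
qed

lemma poly_fun_shift: "poly_fun g \<Longrightarrow> poly_fun (\<lambda>y. g (y + c))"
  by (induction rule: poly_fun.induct) (auto intro: poly_fun.intros)

lemma dF_shift_poly: "poly_fun g \<Longrightarrow> dF (\<lambda>y. g (y + c)) x = dF g (x + c)"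
  by (rule dF_eq, rule has_derivative_shift, rule poly_has_deriv)

lemma cont_zero_punctured:
  fixes F :: "complex \<Rightarrow> complex"
  assumes "continuous_on UNIV F" "\<And>s. s \<noteq> t \<Longrightarrow> F s = 0"
  shows "F t = 0"
proof (rule ccontr)
  assume ne: "F t \<noteq> 0"
  then obtain d where d: "d > 0" "\<forall>s. dist s t < d \<longrightarrow> dist (F s) (F t) < norm (F t)"
    using assms(1) unfolding continuous_on_iff by (metis UNIV_I zero_less_norm_iff)
  define s where "s = t + of_real (d/2)"
  have "s \<noteq> t" using d(1) by (simp add: s_def)
  moreover have "dist s t < d" using d(1) by (simp add: s_def dist_norm)
  ultimately show False using d(2) assms(2) by (metis dist_0_norm dist_commute order_less_irrefl)
qed

context lie begin

lemma K:
  assumes sg: "semi_invariant br g" and wg: "wt br g w"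
      and sh: "semi_invariant br h" and wh: "wt br h w'"
  shows "pair w (dF h y) = 0"
proof -
  have pg: "poly_fun g" and ph: "poly_fun h" using sg sh unfolding semi_invariant_def by auto
  obtain z1 where z1: "g z1 \<noteq> 0" using sg unfolding semi_invariant_def by auto
  obtain z2 where z2: "h z2 \<noteq> 0" using sh unfolding semi_invariant_def by auto
  have s1: "pair w (dF g z) * g z = 0" for z
    using wg pg unfolding wt_def lie_poisson_def by (metis self0 pair_zero2)
  have g0: "pair w (dF g z) = 0" for z
    by (rule poly_domain[OF poly_fun_pair_dF[OF pg] pg s1 z1])
  have gconst: "g (y + s *s w) = g y" for y s
  proof -
    have "\<forall>s\<in>UNIV. ((\<lambda>s. g (y + s *s w)) has_field_derivative 0) (at s within UNIV)"
      using line_deriv[OF poly_has_deriv[OF pg]] g0 by metis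
    then obtain c where "\<forall>s\<in>UNIV. g (y + s *s w) = c"
      using has_field_derivative_zero_constant[of UNIV "\<lambda>s. g (y + s *s w)"] by auto
    then show ?thesis by (metis UNIV_I add.right_neutral vector_smult_lzero)
  qed
  have dgconst: "dF g (y + s *s w) = dF g y" for y s
  proof -
    have "(\<lambda>z. g (z + s *s w)) = g" using gconst by auto
    then show ?thesis using dF_shift_poly[OF pg, of "s *s w" y] by simp
  qed
  have s3: "pair w (dF h z) * g z = - (pair w' (dF g z) * h z)" for z
  proof -
    have "lie_poisson br h g z = pair w (dF h z) * g z" using wg ph unfolding wt_def by blast
    moreover have "lie_poisson br g h z = pair w' (dF g z) * h z" using wh pg unfolding wt_def by blast
    moreover have "lie_poisson br h g z = - lie_poisson br g h z"
      unfolding lie_poisson_def by (rule pair_anti)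
    ultimately show ?thesis by simp
  qed
  have s5: "pair w' (dF g y) * h y = 0" if gy: "g y \<noteq> 0" for y
  proof (rule ccontr)
    define \<beta> where "\<beta> = pair w' (dF g y)"
    assume "pair w' (dF g y) * h y \<noteq> 0"
    then have b: "\<beta> \<noteq> 0" and hy: "h y \<noteq> 0" by (auto simp: \<beta>_def)
    obtain P where P: "\<forall>s. h (y + s *s w) = poly P s" using poly_line[OF ph] by blast
    have Pd: "poly (pderiv P) s = pair w (dF h (y + s *s w))" for s
    proof -
      have "((\<lambda>s. h (y + s *s w)) has_field_derivative pair w (dF h (y + s *s w))) (at s)"
        by (rule line_deriv[OF poly_has_deriv[OF ph]])
      moreover have "(\<lambda>s. h (y + s *s w)) = poly P" using P by auto
      ultimately show ?thesis using poly_DERIV[of P s] DERIV_unique by metis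
    qed
    have eq: "poly (pderiv P) s * g y = - (\<beta> * poly P s)" for s
      using s3[of "y + s *s w"] gconst dgconst P Pd by (simp add: \<beta>_def)
    define c where "c = - g y / \<beta>"
    have "poly P s = poly (smult c (pderiv P)) s" for s
      using eq[of s] b by (simp add: c_def field_simps)
    then have "poly P = poly (smult c (pderiv P))" by (rule ext)
    then have PP: "P = smult c (pderiv P)" by (simp only: poly_eq_poly_eq_iff)
    have "P \<noteq> 0" using P hy by (metis poly_0 add.right_neutral vector_smult_lzero)
    have "degree P \<le> degree (pderiv P)" using PP degree_smult_le by metis
    then have "degree P = 0" by (simp add: degree_pderiv)
    then have "pderiv P = 0" by (simp add: pderiv_eq_0_iff)
    then have "P = 0" using PP by simp
    then show False using \<open>P \<noteq> 0\<close> by simp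
  qed
  have s6: "(pair w' (dF g z) * h z) * g z = 0" for z
    using s5 by (cases "g z = 0") auto
  have b0: "pair w' (dF g z) * h z = 0" for z
    by (rule poly_domain[OF _ pg s6 z1]) (intro pf_mult poly_fun_pair_dF pg ph)
  have b00: "pair w' (dF g z) = 0" for z
    by (rule poly_domain[OF poly_fun_pair_dF[OF pg] ph b0 z2])
  have "pair w (dF h z) * g z = 0" for z using s3 b00 by simp
  then show ?thesis by (rule poly_domain[OF poly_fun_pair_dF[OF ph] pg _ z1])
qed

lemma BB:
  assumes sg: "semi_invariant br g" and sh: "semi_invariant br h"
  shows "pair x (br (dF g (x + t *s a)) (dF h (x + s *s a))) = 0 \<and>
         pair a (br (dF g (x + t *s a)) (dF h (x + s *s a))) = 0"
proof -
  obtain w where wg: "wt br g w" using si_wt[OF sg] by blast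
  obtain w' where wh: "wt br h w'" using si_wt[OF sh] by blast
  have ph: "poly_fun h" using sh unfolding semi_invariant_def by auto
  define u where "u = dF g (x + t *s a)"
  have main: "pair x (br u (dF h (x + \<sigma> *s a))) + \<sigma> * pair a (br u (dF h (x + \<sigma> *s a))) = 0 \<and>
              pair x (br u (dF h (x + \<sigma> *s a))) + t * pair a (br u (dF h (x + \<sigma> *s a))) = 0" for \<sigma>
  proof -
    define v where "v = dF h (x + \<sigma> *s a)"
    have e1: "pair (x + t *s a) (br v u) = 0"
      using si_lin[OF wg, of "x + t *s a" v] K[OF sg wg sh wh] by (simp add: u_def v_def)
    have e2: "pair (x + \<sigma> *s a) (br u v) = 0"
      using si_lin[OF wh, of "x + \<sigma> *s a" u] K[OF sh wh sg wg] by (simp add: u_def v_def)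
    show ?thesis using e1 e2 unfolding v_def[symmetric]
      by (simp add: pair_add1 pair_scale1 pair_anti[of _ v u]) (metis neg_eq_iff_add_eq_0)
  qed
  define A where "A = (\<lambda>\<sigma>. pair a (br u (dF h (x + \<sigma> *s a))))"
  have A0: "A \<sigma> = 0" if "\<sigma> \<noteq> t" for \<sigma>
  proof -
    obtain X Y where "X + \<sigma> * Y = 0" "X + t * Y = 0" "Y = A \<sigma>"
      using main[of \<sigma>] unfolding A_def by blast
    then have "(\<sigma> - t) * A \<sigma> = 0" by (metis add_left_imp_eq left_diff_distrib right_minus_eq)
    then show ?thesis using that by simp
  qed
  have "A t = 0"
  proof (rule cont_zero_punctured[of A t])
    have "A = (\<lambda>\<sigma>. \<Sum>q\<in>UNIV. dF h (x + \<sigma> *s a) $ q * pair a (br u (axis q 1)))"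
      unfolding A_def by (rule ext, rule expand2)
    moreover have "continuous_on UNIV (\<lambda>\<sigma>. \<Sum>q\<in>UNIV. dF h (x + \<sigma> *s a) $ q * pair a (br u (axis q 1)))"
    proof (rule continuous_on_sum, rule continuous_on_mult_right)
      fix q
      have c1: "continuous_on UNIV (\<lambda>\<sigma>::complex. x + \<sigma> *s a)"
        by (intro continuous_intros linear_continuous_on bl_smul)
      show "continuous_on UNIV (\<lambda>\<sigma>. dF h (x + \<sigma> *s a) $ q)"
        by (rule continuous_on_compose2[OF poly_cont[OF poly_dF[OF ph]] c1]) auto
    qed
    ultimately show "continuous_on UNIV A" by simp
  qed (rule A0)
  have AA: "A s = 0" using A0 \<open>A t = 0\<close> by (cases "s = t") auto
  then show ?thesis using main[of s] unfolding A_def u_def by simp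
qed

end


lemma holo_deriv:
  assumes "holo_on f U" "z \<in> U"
  shows "(f has_derivative (\<lambda>v. pair v (dF f z))) (at z)"
proof -
  obtain L where L: "(f has_derivative L) (at z)" "\<And>c v. L (c *s v) = c * L v"
    using assms unfolding holo_on_def by blast
  have fd: "frechet_derivative f (at z) = L" using frechet_derivative_at[OF L(1)] by simp
  have lin: "linear L" using L(1) has_derivative_linear by blast
  have "L v = pair v (dF f z)" for v
    unfolding dF_def fd by (rule clinear_expand[OF lin L(2)])
  then have "L = (\<lambda>v. pair v (dF f z))" by (rule ext)
  then show ?thesis using L(1) by simp
qed

lemma holo_cont: "holo_on f U \<Longrightarrow> continuous_on U f"
  by (meson continuous_at_imp_continuous_on has_derivative_continuous holo_deriv)

lemma holo_line_deriv:
  assumes "holo_on f U" "y + s *s v \<in> U"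
  shows "((\<lambda>s. f (y + s *s v)) has_field_derivative pair v (dF f (y + s *s v))) (at s)"
  by (rule line_deriv[OF holo_deriv[OF assms]])

lemma holo_line_holomorphic:
  assumes "holo_on f U" "\<And>s. s \<in> S \<Longrightarrow> y + s *s v \<in> U"
  shows "(\<lambda>s. f (y + s *s v)) holomorphic_on S"
  unfolding holomorphic_on_def field_differentiable_def
  using holo_line_deriv[OF assms(1) assms(2)] by (meson has_field_derivative_at_within)

lemma holo_line_cont:
  assumes "holo_on f U" "\<And>s. s \<in> S \<Longrightarrow> y + s *s v \<in> U"
  shows "continuous_on S (\<lambda>s. f (y + s *s v))"
  using holo_line_deriv[OF assms(1) assms(2)]
  by (meson DERIV_isCont continuous_at_imp_continuous_on)

lemma norm_axis1: "norm (axis p (1::complex) :: complex^'n) = 1"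
proof -
  have "(\<Sum>i\<in>UNIV. (norm (axis p (1::complex) $ i))\<^sup>2) = (\<Sum>i\<in>UNIV. if i = p then 1 else 0)"
    by (intro sum.cong) (auto simp: axis_def)
  then show ?thesis unfolding norm_vec_def L2_set_def by simp
qed

lemma dF_cont:
  assumes hol: "holo_on f U" and U: "open U"
  shows "continuous_on U (\<lambda>z. dF f z $ p)"
  unfolding continuous_on_iff
proof (intro ballI allI impI)
  fix z0 e assume z0: "z0 \<in> U" and e: "(e::real) > 0"
  obtain \<epsilon> where \<epsilon>: "\<epsilon> > 0" "ball z0 \<epsilon> \<subseteq> U" using U z0 open_contains_ball by blast
  define \<delta> where "\<delta> = \<epsilon> / 3"
  have \<delta>: "\<delta> > 0" using \<epsilon> by (simp add: \<delta>_def)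
  define K where "K = cball z0 (2 * \<delta>)"
  have KU: "K \<subseteq> U" using \<epsilon> unfolding K_def \<delta>_def by (auto simp: subset_eq)
  have "uniformly_continuous_on K f"
    by (rule compact_uniformly_continuous[OF continuous_on_subset[OF holo_cont[OF hol] KU]])
       (simp add: K_def)
  then obtain \<eta> where \<eta>: "\<eta> > 0" "\<forall>u\<in>K. \<forall>u'\<in>K. dist u' u < \<eta> \<longrightarrow> dist (f u') (f u) < e * \<delta> / 2"
    unfolding uniformly_continuous_on_def using e \<delta> by (metis half_gt_zero mult_pos_pos)
  define v :: "complex^'a" where "v = axis p 1"
  have nv: "norm v = 1" by (simp add: v_def norm_axis1)
  show "\<exists>d>0. \<forall>y\<in>U. dist y z0 < d \<longrightarrow> dist (dF f y $ p) (dF f z0 $ p) < e"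
  proof (intro exI[of _ "min \<eta> \<delta>"] conjI ballI impI)
    show "min \<eta> \<delta> > 0" using \<eta> \<delta> by simp
    fix y assume "y \<in> U" and dy: "dist y z0 < min \<eta> \<delta>"
    have inK: "w + s *s v \<in> K" if "dist w z0 < \<delta>" "cmod s \<le> \<delta>" for w s
    proof -
      have "norm (s *s v) \<le> \<delta>" using that(2) by (simp add: norm_smult_vec nv)
      then show ?thesis using that(1) unfolding K_def mem_cball
        by (smt (verit) dist_commute dist_norm dist_triangle norm_minus_commute
            add_diff_cancel_left')
    qed
    define \<phi> where "\<phi> = (\<lambda>s. f (y + s *s v) - f (z0 + s *s v))"
    have y\<delta>: "dist y z0 < \<delta>" and z\<delta>: "dist z0 z0 < \<delta>" using dy \<delta> by auto
    have inU: "y + s *s v \<in> U" "z0 + s *s v \<in> U" if "cmod s \<le> \<delta>" for s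
      using inK[OF y\<delta> that] inK[OF z\<delta> that] KU by auto
    have hol\<phi>: "\<phi> holomorphic_on ball 0 \<delta>" unfolding \<phi>_def
      by (intro holomorphic_intros holo_line_holomorphic[OF hol]) (auto intro: inU)
    have cont\<phi>: "continuous_on (cball 0 \<delta>) \<phi>" unfolding \<phi>_def
      by (intro continuous_intros holo_line_cont[OF hol]) (auto intro: inU)
    have bnd: "norm (\<phi> s) \<le> e * \<delta> / 2" if "norm (0 - s) = \<delta>" for s
    proof -
      have s: "cmod s \<le> \<delta>" using that by simp
      have "dist (y + s *s v) (z0 + s *s v) < \<eta>" using dy by (simp add: dist_norm)
      then have "dist (f (y + s *s v)) (f (z0 + s *s v)) < e * \<delta> / 2"
        using \<eta>(2) inK[OF y\<delta> s] inK[OF z\<delta> s] by blast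
      then show ?thesis by (simp add: \<phi>_def dist_norm)
    qed
    have "norm ((deriv ^^ 1) \<phi> 0) \<le> fact 1 * (e * \<delta> / 2) / \<delta> ^ 1"
      by (rule Cauchy_inequality[OF hol\<phi> cont\<phi> \<delta> bnd])
    then have nd: "norm (deriv \<phi> 0) \<le> e / 2" using \<delta> by simp
    have "(\<phi> has_field_derivative (pair v (dF f y) - pair v (dF f z0))) (at 0)"
      unfolding \<phi>_def
      using DERIV_diff[OF holo_line_deriv[OF hol inU(1)] holo_line_deriv[OF hol inU(2)], of 0]
      using \<delta> by simp
    then have "deriv \<phi> 0 = dF f y $ p - dF f z0 $ p"
      using DERIV_imp_deriv by (metis pair_axis1 v_def)
    then show "dist (dF f y $ p) (dF f z0 $ p) < e" using nd e by (simp add: dist_norm)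
  qed
qed

lemma dF_cont_vec:
  assumes "holo_on f U" "open U"
  shows "continuous_on U (dF f)"
proof -
  have "continuous_on U (\<lambda>z. \<chi> p. dF f z $ p)" by (intro continuous_on_vec_lambda dF_cont[OF assms])
  then show ?thesis by simp
qed



definition kern :: "real \<Rightarrow> nat \<Rightarrow> real \<Rightarrow> complex" where
  "kern r j t = (2 * pi * \<i> * r * exp (2 * of_real pi * \<i> * t)) / (circlepath 0 r t) ^ (Suc j) / (2 * pi * \<i>)"

lemma norm_cp: "r \<ge> 0 \<Longrightarrow> norm (circlepath 0 r t) = r"
proof -
  assume r: "r \<ge> 0"
  have "circlepath 0 r t = of_real r * exp (\<i> * of_real (2 * pi * t))"
    by (simp add: circlepath mult.commute mult.left_commute)
  then show ?thesis using r by (simp add: norm_mult)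
qed

lemma cont_cp: "continuous_on S (circlepath 0 r)"
  unfolding circlepath by (intro continuous_intros)

lemma cont_kern: "r > 0 \<Longrightarrow> continuous_on S (kern r j)"
proof -
  assume r: "r > 0"
  have "circlepath 0 r t \<noteq> 0" for t using norm_cp[of r t] r by auto
  then show ?thesis unfolding kern_def
    by (intro continuous_intros cont_cp) auto
qed

lemma shift_coeff_integral:
  assumes hol: "holo_on f U" and r: "r > 0"
      and inU: "\<And>s. cmod s \<le> r \<Longrightarrow> a + s *s x \<in> U"
  shows "((\<lambda>t. f (a + circlepath 0 r t *s x) * kern r j t) has_integral shift_coeff f a j x) {0..1}"
proof -
  define F where "F = (\<lambda>s. f (a + s *s x))"
  have contF: "continuous_on (cball 0 r) F" unfolding F_def
    by (rule holo_line_cont[OF hol]) (auto intro: inU)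
  have holF: "F holomorphic_on ball 0 r" unfolding F_def
    by (rule holo_line_holomorphic[OF hol]) (auto intro: inU)
  have "((\<lambda>u. F u / (u - 0) ^ (Suc j)) has_contour_integral ((2 * pi * \<i>) / (fact j) * (deriv ^^ j) F 0))
           (circlepath 0 r)"
    by (rule Cauchy_has_contour_integral_higher_derivative_circlepath[OF contF holF]) (simp add: r)
  then have "((\<lambda>t. F (circlepath 0 r t) / (circlepath 0 r t - 0) ^ (Suc j) *
       vector_derivative (circlepath 0 r) (at t within {0..1})) has_integral ((2 * pi * \<i>) / (fact j) * (deriv ^^ j) F 0)) {0..1}"
    unfolding has_contour_integral_def .
  from has_integral_mult_left[OF this, of "1 / (2 * pi * \<i>)"]
  have "((\<lambda>t. F (circlepath 0 r t) / (circlepath 0 r t - 0) ^ (Suc j) *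
       vector_derivative (circlepath 0 r) (at t within {0..1}) * (1 / (2 * pi * \<i>)))
       has_integral ((2 * pi * \<i>) / (fact j) * (deriv ^^ j) F 0) * (1 / (2 * pi * \<i>))) {0..1}" .
  moreover have "(2 * pi * \<i>) / (fact j) * (deriv ^^ j) F 0 * (1 / (2 * pi * \<i>)) = shift_coeff f a j x"
    unfolding shift_coeff_def F_def by simp
  ultimately have "((\<lambda>t. F (circlepath 0 r t) / (circlepath 0 r t - 0) ^ (Suc j) *
       vector_derivative (circlepath 0 r) (at t within {0..1}) * (1 / (2 * pi * \<i>)))
       has_integral shift_coeff f a j x) {0..1}" by simp
  then show ?thesis
  proof (rule has_integral_cong[THEN iffD1, rotated])
    fix t :: real assume "t \<in> {0..1}"
    then show "F (circlepath 0 r t) / (circlepath 0 r t - 0) ^ (Suc j) *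
       vector_derivative (circlepath 0 r) (at t within {0..1}) * (1 / (2 * pi * \<i>)) =
       f (a + circlepath 0 r t *s x) * kern r j t"
      by (simp add: vector_derivative_circlepath01 kern_def F_def)
  qed
qed



lemma bl_pair: "bounded_linear (\<lambda>v::complex^'n. pair v c)"
  unfolding pair_def by (intro bounded_linear_sum bounded_linear_mult_const bounded_linear_vec_nth)

lemma bl_smul2: "bounded_linear (\<lambda>v::complex^'n. c *s v)"
  by (rule linear_conv_bounded_linear[THEN iffD1])
     (auto simp: linear_iff vec_eq_iff algebra_simps vector_scaleR_component)

lemma smul_as_chi: "(c *s y) = (\<chi> i. c * y $ i)"
  by (simp add: vec_eq_iff)

lemma cont_pair_vec:
  assumes "continuous_on S g"
  shows "continuous_on S (\<lambda>z. pair c (g z))"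
  unfolding pair_def by (intro continuous_intros assms)

lemma sc_deriv:
  assumes hol: "holo_on f U" and U: "open U" and aU: "a \<in> U"
  shows "\<exists>r0>0. \<forall>r. 0 < r \<and> r < r0 \<longrightarrow> (\<forall>s. cmod s \<le> r \<longrightarrow> a + s *s x0 \<in> U) \<and>
     (\<forall>p. (\<lambda>t. dF f (a + circlepath 0 r t *s x0) $ p * circlepath 0 r t * kern r j t) integrable_on {0..1}) \<and>
     (shift_coeff f a j has_derivative
        (\<lambda>v. pair v (\<chi> p. integral {0..1} (\<lambda>t. dF f (a + circlepath 0 r t *s x0) $ p * circlepath 0 r t * kern r j t)))) (at x0)"
proof -
  obtain \<delta> where \<delta>: "\<delta> > 0" "ball a \<delta> \<subseteq> U" using U aU open_contains_ball by blast
  define r0 where "r0 = \<delta> / (norm x0 + 1)"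
  have hn: "norm x0 + 1 > 0" by (metis norm_ge_zero add_nonneg_pos zero_less_one)
  have r0: "r0 > 0" using \<delta> hn by (simp add: r0_def)
  show ?thesis
  proof (intro exI[of _ r0] conjI allI impI r0)
    fix r assume r: "0 < r \<and> r < r0"
    define B where "B = ball x0 1"
    have inU': "a + s *s y \<in> U" if "y \<in> B" "cmod s \<le> r" for y s
    proof -
      have ny: "norm y < norm x0 + 1" using that(1) unfolding B_def mem_ball dist_norm
        by (metis add.commute norm_minus_commute norm_triangle_sub order_le_less_trans add_strict_left_mono)
      have "norm (s *s y) = cmod s * norm y" by (rule norm_smult_vec)
      also have "\<dots> \<le> r * norm y" using that(2) by (simp add: mult_right_mono)
      also have "\<dots> \<le> r * (norm x0 + 1)" using ny r by (simp add: mult_left_mono)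
      also have "\<dots> < r0 * (norm x0 + 1)" using r hn by simp
      also have "\<dots> = \<delta>" using hn by (simp add: r0_def)
      finally have "norm (s *s y) < \<delta>" .
      then show ?thesis using \<delta>(2) by (auto simp: dist_norm)
    qed
    show "\<And>s. cmod s \<le> r \<Longrightarrow> a + s *s x0 \<in> U" using inU'[of x0] by (simp add: B_def)
    define \<gamma> where "\<gamma> = circlepath 0 r"
    have n\<gamma>: "cmod (\<gamma> t) \<le> r" for t using norm_cp[of r t] r by (simp add: \<gamma>_def)
    have c\<gamma>: "continuous_on S \<gamma>" for S unfolding \<gamma>_def by (rule cont_cp)
    have ck: "continuous_on S (kern r j)" for S using cont_kern r by blast
    define Fn where "Fn = (\<lambda>y t. f (a + \<gamma> t *s y) * kern r j t)"
    define G where "G = (\<lambda>y t v. pair v (dF f (a + \<gamma> t *s y)) * \<gamma> t * kern r j t)"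
    define fx where "fx = (\<lambda>y t. Blinfun (G y t))"
    have blG: "bounded_linear (G y t)" for y t
      unfolding G_def by (intro bounded_linear_mult_const bl_pair)
    have fxa: "blinfun_apply (fx y t) = G y t" for y t
      unfolding fx_def by (rule bounded_linear_Blinfun_apply[OF blG])
    have eqn: "shift_coeff f a j y = integral (cbox 0 1) (Fn y)" if "y \<in> B" for y
      using shift_coeff_integral[OF hol r[THEN conjunct1], of a y j] inU'[OF that]
      unfolding Fn_def \<gamma>_def by (simp add: integral_unique)
    have cmap: "continuous_on S (\<lambda>z. a + \<gamma> (snd z) *s fst z)" for S
      unfolding smul_as_chi by (intro continuous_intros continuous_on_compose2[OF c\<gamma>]) auto
    have cmap1: "continuous_on S (\<lambda>t. a + \<gamma> t *s y)" for S y
      unfolding smul_as_chi by (intro continuous_intros continuous_on_compose2[OF c\<gamma>]) auto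
    have fx_der: "((\<lambda>y. Fn y t) has_derivative blinfun_apply (fx y t)) (at y within B)"
      if "y \<in> B" "t \<in> cbox 0 1" for y t
    proof -
      have inU: "a + \<gamma> t *s y \<in> U" using inU'[OF that(1) n\<gamma>] .
      have d1: "((\<lambda>y. a + \<gamma> t *s y) has_derivative (\<lambda>v. \<gamma> t *s v)) (at y)"
        using bl_smul2[of "\<gamma> t"] by (auto intro!: derivative_eq_intros bounded_linear_imp_has_derivative)
      have d2: "((\<lambda>y. f (a + \<gamma> t *s y)) has_derivative (\<lambda>v. pair (\<gamma> t *s v) (dF f (a + \<gamma> t *s y)))) (at y)"
        using has_derivative_compose[OF d1 holo_deriv[OF hol inU]] by (simp add: o_def)
      have d3: "((\<lambda>y. f (a + \<gamma> t *s y) * kern r j t) has_derivative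
                 (\<lambda>v. pair (\<gamma> t *s v) (dF f (a + \<gamma> t *s y)) * kern r j t)) (at y)"
        by (rule has_derivative_mult_left[OF d2])
      have "(\<lambda>v. pair (\<gamma> t *s v) (dF f (a + \<gamma> t *s y)) * kern r j t) = G y t"
        unfolding G_def by (auto simp: pair_scale1 algebra_simps)
      then show ?thesis using d3 unfolding Fn_def fxa by (simp add: has_derivative_at_withinI)
    qed
    have Fn_int: "Fn y integrable_on cbox 0 1" if "y \<in> B" for y
    proof -
      have "continuous_on (cbox 0 1) (\<lambda>t. f (a + \<gamma> t *s y))"
        by (rule continuous_on_compose2[OF holo_cont[OF hol] cmap1]) (use inU'[OF that n\<gamma>] in auto)
      then show ?thesis unfolding Fn_def by (intro integrable_continuous continuous_intros ck)
    qed
    have cdF: "continuous_on (B \<times> cbox 0 1) (\<lambda>z. dF f (a + \<gamma> (snd z) *s fst z))"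
      by (rule continuous_on_compose2[OF dF_cont_vec[OF hol U] cmap]) (use inU' n\<gamma> in auto)
    have cont_fx: "continuous_on (B \<times> cbox 0 1) (\<lambda>(y, t). fx y t)"
    proof (rule continuous_on_blinfun_componentwise)
      fix i :: "complex^'a" assume "i \<in> Basis"
      have "(\<lambda>z. blinfun_apply ((\<lambda>(y, t). fx y t) z) i) =
            (\<lambda>z. pair i (dF f (a + \<gamma> (snd z) *s fst z)) * \<gamma> (snd z) * kern r j (snd z))"
        by (auto simp: fxa G_def)
      moreover have "continuous_on (B \<times> cbox 0 1) (\<lambda>z. pair i (dF f (a + \<gamma> (snd z) *s fst z)) * \<gamma> (snd z) * kern r j (snd z))"
        by (intro continuous_intros cont_pair_vec cdF continuous_on_compose2[OF c\<gamma>]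
            continuous_on_compose2[OF ck]) auto
      ultimately show "continuous_on (B \<times> cbox 0 1) (\<lambda>z. blinfun_apply ((\<lambda>(y, t). fx y t) z) i)" by metis
    qed
    have x0B: "x0 \<in> B" by (simp add: B_def)
    have L: "((\<lambda>y. integral (cbox 0 1) (Fn y)) has_derivative integral (cbox 0 1) (fx x0)) (at x0 within B)"
      by (rule leibniz_rule[OF fx_der Fn_int cont_fx x0B]) (auto simp: B_def)
    then have L2: "((\<lambda>y. integral (cbox 0 1) (Fn y)) has_derivative integral (cbox 0 1) (fx x0)) (at x0)"
      using at_within_open[OF x0B] by (simp add: B_def)
    have L3: "(shift_coeff f a j has_derivative integral (cbox 0 1) (fx x0)) (at x0)"
    proof (rule has_derivative_transform_within_open[OF L2, of B])
      show "open B" "x0 \<in> B" by (auto simp: B_def)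
      show "\<And>y. y \<in> B \<Longrightarrow> integral (cbox 0 1) (Fn y) = shift_coeff f a j y" using eqn by simp
    qed
    have cfx0: "continuous_on (cbox 0 1) (fx x0)"
    proof -
      have "continuous_on (cbox 0 1) (\<lambda>t. (\<lambda>(y, t). fx y t) (x0, t))"
        by (rule continuous_on_compose2[OF cont_fx]) (auto intro!: continuous_intros simp: x0B)
      then show ?thesis by simp
    qed
    have gp_int: "(\<lambda>t. dF f (a + \<gamma> t *s x0) $ p * \<gamma> t * kern r j t) integrable_on {0..1}" for p
    proof -
      have "continuous_on {0..1} (\<lambda>t. dF f (a + \<gamma> t *s x0))"
        by (rule continuous_on_compose2[OF dF_cont_vec[OF hol U] cmap1]) (use inU'[OF x0B n\<gamma>] in auto)
      then show ?thesis by (intro integrable_continuous_interval continuous_intros c\<gamma> ck)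
    qed
    have "blinfun_apply (integral (cbox 0 1) (fx x0)) v =
          pair v (\<chi> p. integral {0..1} (\<lambda>t. dF f (a + \<gamma> t *s x0) $ p * \<gamma> t * kern r j t))" for v
    proof -
      have "blinfun_apply (integral (cbox 0 1) (fx x0)) v = integral (cbox 0 1) (\<lambda>t. G x0 t v)"
        using blinfun_apply_integral[OF integrable_continuous[OF cfx0]] by (simp add: fxa)
      also have "\<dots> = integral {0..1} (\<lambda>t. \<Sum>p\<in>UNIV. v $ p * (dF f (a + \<gamma> t *s x0) $ p * \<gamma> t * kern r j t))"
        unfolding G_def pair_def by (simp add: sum_distrib_right sum_distrib_left mult_ac)
      also have "\<dots> = (\<Sum>p\<in>UNIV. v $ p * integral {0..1} (\<lambda>t. dF f (a + \<gamma> t *s x0) $ p * \<gamma> t * kern r j t))"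
        by (subst integral_sum) (auto intro: integrable_on_mult_right gp_int)
      also have "\<dots> = pair v (\<chi> p. integral {0..1} (\<lambda>t. dF f (a + \<gamma> t *s x0) $ p * \<gamma> t * kern r j t))"
        unfolding pair_def by simp
      finally show ?thesis .
    qed
    note bv = this
    show "\<And>p. (\<lambda>t. dF f (a + circlepath 0 r t *s x0) $ p * circlepath 0 r t * kern r j t) integrable_on {0..1}"
      using gp_int unfolding \<gamma>_def by blast
    from bv have "blinfun_apply (integral (cbox 0 1) (fx x0)) =
          (\<lambda>v. pair v (\<chi> p. integral {0..1} (\<lambda>t. dF f (a + \<gamma> t *s x0) $ p * \<gamma> t * kern r j t)))"
      by (rule ext)
    then show "(shift_coeff f a j has_derivative
        (\<lambda>v. pair v (\<chi> p. integral {0..1} (\<lambda>t. dF f (a + circlepath 0 r t *s x0) $ p * circlepath 0 r t * kern r j t)))) (at x0)"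
      using L3 unfolding \<gamma>_def by simp
  qed
qed



lemma sc_facts:
  assumes hol: "holo_on f U" and U: "open U" and aU: "a \<in> U"
  shows "\<exists>r0>0. \<forall>r. 0 < r \<and> r < r0 \<longrightarrow> (\<forall>s. cmod s \<le> r \<longrightarrow> a + s *s x0 \<in> U) \<and>
     (\<forall>lf. (\<forall>t\<in>{0..1}. (\<Sum>p\<in>UNIV. dF f (a + circlepath 0 r t *s x0) $ p * lf p) = 0) \<longrightarrow>
           (\<Sum>p\<in>UNIV. dF (shift_coeff f a j) x0 $ p * lf p) = 0)"
proof -
  obtain r0 where r0: "r0 > 0" and H: "\<forall>r. 0 < r \<and> r < r0 \<longrightarrow> (\<forall>s. cmod s \<le> r \<longrightarrow> a + s *s x0 \<in> U) \<and>
     (\<forall>p. (\<lambda>t. dF f (a + circlepath 0 r t *s x0) $ p * circlepath 0 r t * kern r j t) integrable_on {0..1}) \<and>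
     (shift_coeff f a j has_derivative
        (\<lambda>v. pair v (\<chi> p. integral {0..1} (\<lambda>t. dF f (a + circlepath 0 r t *s x0) $ p * circlepath 0 r t * kern r j t)))) (at x0)"
    using sc_deriv[OF hol U aU, of x0 j] by blast
  show ?thesis
  proof (intro exI[of _ r0] conjI r0 allI impI)
    fix r assume r: "0 < r \<and> r < r0"
    show "\<And>s. cmod s \<le> r \<Longrightarrow> a + s *s x0 \<in> U" using H r by blast
    define g where "g = (\<lambda>p t. dF f (a + circlepath 0 r t *s x0) $ p * circlepath 0 r t * kern r j t)"
    have gi: "g p integrable_on {0..1}" for p using H r unfolding g_def by blast
    have dd: "dF (shift_coeff f a j) x0 = (\<chi> p. integral {0..1} (g p))"
      using dF_eq H r unfolding g_def by blast
    fix lf :: "'a \<Rightarrow> complex"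
    assume z: "\<forall>t\<in>{0..1}. (\<Sum>p\<in>UNIV. dF f (a + circlepath 0 r t *s x0) $ p * lf p) = 0"
    have "(\<Sum>p\<in>UNIV. dF (shift_coeff f a j) x0 $ p * lf p) = (\<Sum>p\<in>UNIV. integral {0..1} (\<lambda>t. g p t * lf p))"
      unfolding dd by simp
    also have "\<dots> = integral {0..1} (\<lambda>t. \<Sum>p\<in>UNIV. g p t * lf p)"
      by (rule integral_sum[symmetric]) (auto intro: integrable_on_mult_left gi)
    also have "\<dots> = integral {0..1} (\<lambda>t::real. 0::complex)"
    proof (rule integral_cong)
      fix t :: real assume "t \<in> {0..1}"
      then have "(\<Sum>p\<in>UNIV. dF f (a + circlepath 0 r t *s x0) $ p * lf p) = 0" using z by blast
      then have "(\<Sum>p\<in>UNIV. dF f (a + circlepath 0 r t *s x0) $ p * lf p) * (circlepath 0 r t * kern r j t) = 0"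
        by simp
      then show "(\<Sum>p\<in>UNIV. g p t * lf p) = 0"
        unfolding g_def sum_distrib_right by (simp add: mult_ac)
    qed
    finally show "(\<Sum>p\<in>UNIV. dF (shift_coeff f a j) x0 $ p * lf p) = 0" by simp
  qed
qed

lemma sc_differentiable:
  assumes hol: "holo_on f U" and U: "open U" and aU: "a \<in> U"
  shows "shift_coeff f a j differentiable (at x0)"
proof -
  obtain r0 where r0: "r0 > 0" and H: "\<forall>r. 0 < r \<and> r < r0 \<longrightarrow> (\<forall>s. cmod s \<le> r \<longrightarrow> a + s *s x0 \<in> U) \<and>
     (\<forall>p. (\<lambda>t. dF f (a + circlepath 0 r t *s x0) $ p * circlepath 0 r t * kern r j t) integrable_on {0..1}) \<and>
     (shift_coeff f a j has_derivative
        (\<lambda>v. pair v (\<chi> p. integral {0..1} (\<lambda>t. dF f (a + circlepath 0 r t *s x0) $ p * circlepath 0 r t * kern r j t)))) (at x0)"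
    using sc_deriv[OF hol U aU, of x0 j] by blast
  have "0 < r0 / 2 \<and> r0 / 2 < r0" using r0 by simp
  then show ?thesis using H unfolding differentiable_def by blast
qed

context lie begin

lemma sc_br1:
  assumes F: "\<forall>lf. (\<forall>t\<in>{0..1}. (\<Sum>p\<in>UNIV. dF f (a + circlepath 0 r t *s x) $ p * lf p) = 0) \<longrightarrow>
           (\<Sum>p\<in>UNIV. dF (shift_coeff f a j) x $ p * lf p) = 0"
    and z: "\<forall>t\<in>{0..1}. pair z (br (dF f (a + circlepath 0 r t *s x)) \<eta>) = 0"
  shows "pair z (br (dF (shift_coeff f a j) x) \<eta>) = 0"
  using F[rule_format, of "\<lambda>p. pair z (br (axis p 1) \<eta>)"] z
  by (simp add: expand1[symmetric])

lemma sc_br2: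
  assumes F: "\<forall>lf. (\<forall>t\<in>{0..1}. (\<Sum>p\<in>UNIV. dF f (a + circlepath 0 r t *s x) $ p * lf p) = 0) \<longrightarrow>
           (\<Sum>p\<in>UNIV. dF (shift_coeff f a j) x $ p * lf p) = 0"
    and z: "\<forall>t\<in>{0..1}. pair z (br \<eta> (dF f (a + circlepath 0 r t *s x))) = 0"
  shows "pair z (br \<eta> (dF (shift_coeff f a j) x)) = 0"
  using F[rule_format, of "\<lambda>p. pair z (br \<eta> (axis p 1))"] z
  by (simp add: expand2[symmetric])

lemma core_AA:
  assumes "\<zeta> \<in> stab br (a + lam *s x)" "\<theta> \<in> stab br (a + mu *s x)" "lam \<noteq> mu"
  shows "pair x (br \<zeta> \<theta>) = 0 \<and> pair a (br \<zeta> \<theta>) = 0"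
proof -
  have e1: "pair a (br \<zeta> \<theta>) + lam * pair x (br \<zeta> \<theta>) = 0"
    using assms(1) unfolding stab_def by (simp add: pair_add1 pair_scale1)
  have "pair a (br \<theta> \<zeta>) + mu * pair x (br \<theta> \<zeta>) = 0"
    using assms(2) unfolding stab_def by (simp add: pair_add1 pair_scale1)
  then have e2: "pair a (br \<zeta> \<theta>) + mu * pair x (br \<zeta> \<theta>) = 0"
    by (simp add: pair_anti[of _ \<theta> \<zeta>]) (metis neg_eq_iff_add_eq_0)
  have "(lam - mu) * pair x (br \<zeta> \<theta>) = (pair a (br \<zeta> \<theta>) + lam * pair x (br \<zeta> \<theta>)) - (pair a (br \<zeta> \<theta>) + mu * pair x (br \<zeta> \<theta>))"
    by (simp add: algebra_simps)
  then have "(lam - mu) * pair x (br \<zeta> \<theta>) = 0" using e1 e2 by simp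
  then have X: "pair x (br \<zeta> \<theta>) = 0" using assms(3) by simp
  then show ?thesis using e1 by simp
qed

lemma li_stab: "local_invariant br f U \<Longrightarrow> y \<in> U \<Longrightarrow> dF f y \<in> stab br y"
  unfolding local_invariant_def by blast

lemma AA:
  assumes l1: "local_invariant br f1 U1" "a \<in> U1" and l2: "local_invariant br f2 U2" "a \<in> U2"
  shows "pair x (br (dF (shift_coeff f1 a j) x) (dF (shift_coeff f2 a l) x)) = 0 \<and>
         pair a (br (dF (shift_coeff f1 a j) x) (dF (shift_coeff f2 a l) x)) = 0"
proof -
  have h1: "holo_on f1 U1" "open U1" and h2: "holo_on f2 U2" "open U2"
    using l1 l2 unfolding local_invariant_def by auto
  obtain r01 where r01: "r01 > 0" and H1: "\<forall>r. 0 < r \<and> r < r01 \<longrightarrow> (\<forall>s. cmod s \<le> r \<longrightarrow> a + s *s x \<in> U1) \<and>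
     (\<forall>lf. (\<forall>t\<in>{0..1}. (\<Sum>p\<in>UNIV. dF f1 (a + circlepath 0 r t *s x) $ p * lf p) = 0) \<longrightarrow>
           (\<Sum>p\<in>UNIV. dF (shift_coeff f1 a j) x $ p * lf p) = 0)"
    using sc_facts[OF h1 l1(2), of x j] by blast
  obtain r02 where r02: "r02 > 0" and H2: "\<forall>r. 0 < r \<and> r < r02 \<longrightarrow> (\<forall>s. cmod s \<le> r \<longrightarrow> a + s *s x \<in> U2) \<and>
     (\<forall>lf. (\<forall>t\<in>{0..1}. (\<Sum>p\<in>UNIV. dF f2 (a + circlepath 0 r t *s x) $ p * lf p) = 0) \<longrightarrow>
           (\<Sum>p\<in>UNIV. dF (shift_coeff f2 a l) x $ p * lf p) = 0)"
    using sc_facts[OF h2 l2(2), of x l] by blast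
  define r1 where "r1 = min r01 r02 / 2"
  define r2 where "r2 = min r01 r02 / 3"
  have r1: "0 < r1 \<and> r1 < r01" and r2: "0 < r2 \<and> r2 < r02" and r12: "r1 \<noteq> r2"
    using r01 r02 by (auto simp: r1_def r2_def min_def)
  have G1a: "\<And>s. cmod s \<le> r1 \<Longrightarrow> a + s *s x \<in> U1" and G1b: "\<forall>lf. (\<forall>t\<in>{0..1}. (\<Sum>p\<in>UNIV. dF f1 (a + circlepath 0 r1 t *s x) $ p * lf p) = 0) \<longrightarrow>
           (\<Sum>p\<in>UNIV. dF (shift_coeff f1 a j) x $ p * lf p) = 0"
    using H1 r1 by blast+
  have G2a: "\<And>s. cmod s \<le> r2 \<Longrightarrow> a + s *s x \<in> U2" and G2b: "\<forall>lf. (\<forall>t\<in>{0..1}. (\<Sum>p\<in>UNIV. dF f2 (a + circlepath 0 r2 t *s x) $ p * lf p) = 0) \<longrightarrow>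
           (\<Sum>p\<in>UNIV. dF (shift_coeff f2 a l) x $ p * lf p) = 0"
    using H2 r2 by blast+
  have core: "pair z (br (dF f1 (a + circlepath 0 r1 t *s x)) (dF f2 (a + circlepath 0 r2 t' *s x))) = 0"
    if "z = x \<or> z = a" for z t t'
  proof -
    have n1: "cmod (circlepath 0 r1 t) = r1" using norm_cp r1 by simp
    have n2: "cmod (circlepath 0 r2 t') = r2" using norm_cp r2 by simp
    have ne: "circlepath 0 r1 t \<noteq> circlepath 0 r2 t'" using n1 n2 r12 by auto
    have "dF f1 (a + circlepath 0 r1 t *s x) \<in> stab br (a + circlepath 0 r1 t *s x)"
      by (rule li_stab[OF l1(1) G1a]) (simp add: n1)
    moreover have "dF f2 (a + circlepath 0 r2 t' *s x) \<in> stab br (a + circlepath 0 r2 t' *s x)"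
      by (rule li_stab[OF l2(1) G2a]) (simp add: n2)
    ultimately show ?thesis using core_AA ne that by blast
  qed
  have fin: "pair z (br (dF (shift_coeff f1 a j) x) (dF (shift_coeff f2 a l) x)) = 0" if "z = x \<or> z = a" for z
  proof (rule sc_br1[OF G1b], intro ballI)
    fix t :: real
    show "pair z (br (dF f1 (a + circlepath 0 r1 t *s x)) (dF (shift_coeff f2 a l) x)) = 0"
      by (rule sc_br2[OF G2b]) (use core that in blast)
  qed
  show ?thesis using fin by blast
qed

end


lemma dF_const: "dF (\<lambda>x. c) (x::complex^'n) = 0"
proof -
  have "((\<lambda>x::complex^'n. c) has_derivative (\<lambda>v. pair v 0)) (at x)" by (simp add: has_derivative_const)
  then show ?thesis by (rule dF_eq)
qed

lemma dF_add:
  assumes "P differentiable (at x)" "Q differentiable (at x)"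
  shows "dF (\<lambda>x. P x + Q x) x = dF P x + dF Q x"
proof -
  have "((\<lambda>x. P x + Q x) has_derivative (\<lambda>h. frechet_derivative P (at x) h + frechet_derivative Q (at x) h)) (at x)"
    using assms frechet_derivative_works by (blast intro: has_derivative_add)
  then have "frechet_derivative (\<lambda>x. P x + Q x) (at x) = (\<lambda>h. frechet_derivative P (at x) h + frechet_derivative Q (at x) h)"
    by (rule frechet_derivative_at[symmetric])
  then show ?thesis unfolding dF_def by (simp add: vec_eq_iff)
qed

lemma dF_mult:
  assumes "P differentiable (at x)" "Q differentiable (at x)"
  shows "dF (\<lambda>x. P x * Q x) x = P x *s dF Q x + Q x *s dF P x"
proof -
  have "((\<lambda>x. P x * Q x) has_derivative (\<lambda>h. P x * frechet_derivative Q (at x) h + frechet_derivative P (at x) h * Q x)) (at x)"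
    using assms frechet_derivative_works by (blast intro: has_derivative_mult)
  then have "frechet_derivative (\<lambda>x. P x * Q x) (at x) = (\<lambda>h. P x * frechet_derivative Q (at x) h + frechet_derivative P (at x) h * Q x)"
    by (rule frechet_derivative_at[symmetric])
  note eq = this
  show ?thesis unfolding dF_def vec_eq_iff
  proof
    fix i
    have "frechet_derivative (\<lambda>x. P x * Q x) (at x) (axis i 1) =
      P x * frechet_derivative Q (at x) (axis i 1) + frechet_derivative P (at x) (axis i 1) * Q x"
      by (subst eq) (rule refl)
    then show "(\<chi> i. frechet_derivative (\<lambda>x. P x * Q x) (at x) (axis i 1)) $ i =
      (P x *s (\<chi> i. frechet_derivative Q (at x) (axis i 1)) + Q x *s (\<chi> i. frechet_derivative P (at x) (axis i 1))) $ i"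
      by (simp only: vec_lambda_beta vector_add_component vector_smult_component mult.commute[of "Q x"])
  qed
qed

lemma gen_diff:
  assumes "\<forall>P\<in>G. \<forall>x. P differentiable (at x)" "P \<in> gen_alg G"
  shows "P differentiable (at x)"
  using assms(2)
proof (induction arbitrary: x rule: gen_alg.induct)
  case (ga_gen f) then show ?case using assms(1) by blast
next
  case (ga_const c) then show ?case by simp
next
  case (ga_add f g) then show ?case by (simp add: differentiable_add)
next
  case (ga_mult f g) then show ?case by (simp add: differentiable_mult)
qed

context lie begin

lemma comm1:
  assumes Gd: "\<forall>P\<in>G. \<forall>x. P differentiable (at x)" and Qd: "\<forall>x. Q differentiable (at x)"
      and G0: "\<forall>P\<in>G. \<forall>x. pair (zf x) (br (dF P x) (dF Q x)) = 0"
      and P: "P \<in> gen_alg G"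
  shows "pair (zf x) (br (dF P x) (dF Q x)) = 0"
  using P
proof (induction arbitrary: x rule: gen_alg.induct)
  case (ga_gen f) then show ?case using G0 by blast
next
  case (ga_const c) then show ?case by (simp add: dF_const)
next
  case (ga_add f g)
  have "f differentiable (at x)" "g differentiable (at x)" using gen_diff[OF Gd] ga_add.hyps by blast+
  then show ?case using ga_add.IH by (simp add: dF_add add1 pair_add2)
next
  case (ga_mult f g)
  have "f differentiable (at x)" "g differentiable (at x)" using gen_diff[OF Gd] ga_mult.hyps by blast+
  then show ?case using ga_mult.IH by (simp add: dF_mult add1 scale1 pair_add2 pair_scale2)
qed

lemma comm_all:
  assumes Gd: "\<forall>P\<in>G. \<forall>x. P differentiable (at x)"
      and G0: "\<forall>P\<in>G. \<forall>Q\<in>G. \<forall>x. pair (zf x) (br (dF P x) (dF Q x)) = 0"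
      and P: "P \<in> gen_alg G" and Q: "Q \<in> gen_alg G"
  shows "pair (zf x) (br (dF P x) (dF Q x)) = 0"
proof -
  have s1: "pair (zf x) (br (dF P' x) (dF Q' x)) = 0" if "P' \<in> gen_alg G" "Q' \<in> G" for P' Q' x
    by (rule comm1[OF Gd _ _ that(1)]) (use Gd G0 that(2) in blast)+
  have s2: "pair (zf x) (br (dF Q' x) (dF P x)) = 0" if "Q' \<in> G" for Q' x
    using s1[OF P that, of x] pair_anti by (metis neg_equal_0_iff_equal)
  have "pair (zf x) (br (dF Q x) (dF P x)) = 0"
    by (rule comm1[OF Gd _ _ Q]) (use s2 gen_diff[OF Gd P] in blast)+
  then show ?thesis using pair_anti by (metis neg_equal_0_iff_equal)
qed

end


context lie begin

lemma Kp:
  assumes li: "local_invariant br f U" and yU: "y \<in> U"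
      and sg: "semi_invariant br g" and wg: "wt br g w"
  shows "pair w (dF f y) = 0"
proof (rule ccontr)
  assume ne: "pair w (dF f y) \<noteq> 0"
  have hol: "holo_on f U" and U: "open U" using li unfolding local_invariant_def by auto
  have pg: "poly_fun g" using sg unfolding semi_invariant_def by auto
  obtain z1 where z1: "g z1 \<noteq> 0" using sg unfolding semi_invariant_def by auto
  have "continuous_on U (\<lambda>z. pair w (dF f z))" by (rule cont_pair_vec[OF dF_cont_vec[OF hol U]])
  then obtain d where d: "d > 0" "\<forall>z\<in>U. dist z y < d \<longrightarrow> dist (pair w (dF f z)) (pair w (dF f y)) < norm (pair w (dF f y))"
    using yU ne unfolding continuous_on_iff by (metis zero_less_norm_iff)
  obtain \<epsilon> where \<epsilon>: "\<epsilon> > 0" "ball y \<epsilon> \<subseteq> U" using U yU open_contains_ball by blast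
  have "g z = 0" if "z \<in> ball y (min d \<epsilon>)" for z
  proof -
    have zU: "z \<in> U" using that \<epsilon> by auto
    have "dist z y < d" using that by (simp add: dist_commute)
    then have nz: "pair w (dF f z) \<noteq> 0" using d zU
      by (metis dist_0_norm dist_commute order_less_irrefl)
    have "dF f z \<in> stab br z" using li zU unfolding local_invariant_def by blast
    then have "pair z (br (dF f z) (dF g z)) = 0" unfolding stab_def by blast
    then have "pair w (dF f z) * g z = 0" using si_lin[OF wg, of z "dF f z"] by simp
    then show ?thesis using nz by simp
  qed
  then have "g z1 = 0" using poly_zero_ball[OF pg, of "min d \<epsilon>" y] d \<epsilon> by auto
  then show False using z1 by simp
qed

lemma AB:
  assumes l1: "local_invariant br f1 U1" "a \<in> U1" and sg: "semi_invariant br g"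
  shows "pair x (br (dF (shift_coeff f1 a j) x) (dF g (x + t *s a))) = 0 \<and>
         pair a (br (dF (shift_coeff f1 a j) x) (dF g (x + t *s a))) = 0"
proof -
  obtain w where wg: "wt br g w" using si_wt[OF sg] by blast
  have h1: "holo_on f1 U1" "open U1" using l1 unfolding local_invariant_def by auto
  obtain r0 where r0: "r0 > 0" and H1: "\<forall>r. 0 < r \<and> r < r0 \<longrightarrow> (\<forall>s. cmod s \<le> r \<longrightarrow> a + s *s x \<in> U1) \<and>
     (\<forall>lf. (\<forall>t\<in>{0..1}. (\<Sum>p\<in>UNIV. dF f1 (a + circlepath 0 r t *s x) $ p * lf p) = 0) \<longrightarrow>
           (\<Sum>p\<in>UNIV. dF (shift_coeff f1 a j) x $ p * lf p) = 0)"
    using sc_facts[OF h1 l1(2), of x j] by blast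
  define r where "r = min r0 (1 / (cmod t + 1)) / 2"
  have ct: "cmod t + 1 > 0" by (metis norm_ge_zero add_nonneg_pos zero_less_one)
  have r: "0 < r \<and> r < r0" using r0 ct by (auto simp: r_def min_def)
  have rt: "cmod t * r < 1"
  proof -
    have "min r0 (1 / (cmod t + 1)) \<le> 1 / (cmod t + 1)" by (rule min.cobounded2)
    then have "r \<le> (1 / (cmod t + 1)) / 2" unfolding r_def by (simp only: divide_right_mono zero_le_numeral)
    then have "cmod t * r \<le> cmod t * ((1 / (cmod t + 1)) / 2)" by (rule mult_left_mono) simp
    also have "\<dots> < 1" using ct by (simp add: field_simps)
    finally show ?thesis .
  qed
  have G1a: "\<And>s. cmod s \<le> r \<Longrightarrow> a + s *s x \<in> U1" and G1b: "\<forall>lf. (\<forall>t\<in>{0..1}. (\<Sum>p\<in>UNIV. dF f1 (a + circlepath 0 r t *s x) $ p * lf p) = 0) \<longrightarrow>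
           (\<Sum>p\<in>UNIV. dF (shift_coeff f1 a j) x $ p * lf p) = 0"
    using H1 r by blast+
  define u where "u = dF g (x + t *s a)"
  have core: "pair x (br (dF f1 (a + circlepath 0 r \<tau> *s x)) u) = 0 \<and> pair a (br (dF f1 (a + circlepath 0 r \<tau> *s x)) u) = 0" for \<tau>
  proof -
    define lam where "lam = circlepath 0 r \<tau>"
    define \<zeta> where "\<zeta> = dF f1 (a + lam *s x)"
    have nl: "cmod lam = r" using norm_cp r by (simp add: lam_def)
    have inU: "a + lam *s x \<in> U1" using G1a nl by simp
    have "\<zeta> \<in> stab br (a + lam *s x)" unfolding \<zeta>_def by (rule li_stab[OF l1(1) inU])
    then have e1: "pair a (br \<zeta> u) + lam * pair x (br \<zeta> u) = 0"
      unfolding stab_def by (simp add: pair_add1 pair_scale1)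
    have "pair w \<zeta> = 0" unfolding \<zeta>_def by (rule Kp[OF l1(1) inU sg wg])
    then have e2: "pair x (br \<zeta> u) + t * pair a (br \<zeta> u) = 0"
      using si_lin[OF wg, of "x + t *s a" \<zeta>] by (simp add: u_def pair_add1 pair_scale1)
    have "(1 - t * lam) * pair x (br \<zeta> u) = (pair x (br \<zeta> u) + t * pair a (br \<zeta> u)) - t * (pair a (br \<zeta> u) + lam * pair x (br \<zeta> u))"
      by (simp add: algebra_simps)
    then have "(1 - t * lam) * pair x (br \<zeta> u) = 0" using e1 e2 by simp
    moreover have "t * lam \<noteq> 1"
    proof
      assume "t * lam = 1"
      then have "cmod (t * lam) = 1" by simp
      then show False using rt nl by (simp add: norm_mult)
    qed
    ultimately have X: "pair x (br \<zeta> u) = 0" by simp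
    then show ?thesis using e1 unfolding \<zeta>_def lam_def by simp
  qed
  have fin: "pair z (br (dF (shift_coeff f1 a j) x) u) = 0" if "z = x \<or> z = a" for z
    by (rule sc_br1[OF G1b]) (use core that in blast)
  show ?thesis using fin unfolding u_def by blast
qed

end

theorem mainTheorem4:
  fixes br :: "complex^'n \<Rightarrow> complex^'n \<Rightarrow> complex^'n"
    and a :: "complex^'n"
    and f :: "nat \<Rightarrow> complex^'n \<Rightarrow> complex"
    and m :: nat
  assumes "lie_algebra br"
    and "regular br a"
    and "m = lie_index br"
    and "\<And>i. i < m \<Longrightarrow> \<exists>U. a \<in> U \<and> local_invariant br (f i) U"
    and "inj_on (\<lambda>i. dF (f i) a) {..<m}"
    and "vec.independent ((\<lambda>i. dF (f i) a) ` {..<m})"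
    and "vec.span ((\<lambda>i. dF (f i) a) ` {..<m}) = stab br a"
  shows "\<forall>P\<in>shifts_si_alg br f m a. \<forall>Q\<in>shifts_si_alg br f m a.
           (\<forall>x. lie_poisson br P Q x = 0) \<and> (\<forall>x. frozen_bracket br a P Q x = 0)"
proof -
  interpret lie br by unfold_locales (rule assms(1))
  define G where "G = {shift_coeff (f i) a j | i j. i < m \<and> j > 0} \<union>
      {(\<lambda>x. g (x + t *s a)) | g t. semi_invariant br g}"
  have li: "\<exists>U. a \<in> U \<and> local_invariant br (f i) U" if "i < m" for i using assms(4) that by blast
  have Gd: "\<forall>P\<in>G. \<forall>x. P differentiable (at x)"
  proof (intro ballI allI)
    fix P x assume "P \<in> G"
    then consider (sc) i j where "i < m" "P = shift_coeff (f i) a j"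
      | (si) g t where "semi_invariant br g" "P = (\<lambda>x. g (x + t *s a))"
      unfolding G_def by blast
    then show "P differentiable (at x)"
    proof cases
      case sc
      then obtain U where "a \<in> U" "local_invariant br (f i) U" using li by blast
      then show ?thesis using sc sc_differentiable unfolding local_invariant_def by blast
    next
      case si
      then have "poly_fun (\<lambda>x. g (x + t *s a))" using poly_fun_shift unfolding semi_invariant_def by blast
      then show ?thesis using si poly_has_deriv unfolding differentiable_def by blast
    qed
  qed
  have G0: "pair x (br (dF P x) (dF Q x)) = 0 \<and> pair a (br (dF P x) (dF Q x)) = 0"
    if P: "P \<in> G" and Q: "Q \<in> G" for P Q x
  proof -
    have dsi: "dF (\<lambda>x. g (x + t *s a)) x = dF g (x + t *s a)" if "semi_invariant br g" for g t
      using dF_shift_poly that unfolding semi_invariant_def by blast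
    from P consider (sc) i j where "i < m" "P = shift_coeff (f i) a j"
      | (si) g t where "semi_invariant br g" "P = (\<lambda>x. g (x + t *s a))"
      unfolding G_def by blast
    then show ?thesis
    proof cases
      case sc
      obtain U where U: "a \<in> U" "local_invariant br (f i) U" using li sc(1) by blast
      from Q consider (sc2) i' j' where "i' < m" "Q = shift_coeff (f i') a j'"
        | (si2) g' t' where "semi_invariant br g'" "Q = (\<lambda>x. g' (x + t' *s a))"
        unfolding G_def by blast
      then show ?thesis
      proof cases
        case sc2
        obtain U' where U': "a \<in> U'" "local_invariant br (f i') U'" using li sc2(1) by blast
        show ?thesis using AA[OF U(2,1) U'(2,1)] sc sc2 by simp
      next
        case si2
        show ?thesis using AB[OF U(2,1) si2(1)] sc si2 dsi[OF si2(1)] by simp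
      qed
    next
      case si
      from Q consider (sc2) i' j' where "i' < m" "Q = shift_coeff (f i') a j'"
        | (si2) g' t' where "semi_invariant br g'" "Q = (\<lambda>x. g' (x + t' *s a))"
        unfolding G_def by blast
      then show ?thesis
      proof cases
        case sc2
        obtain U' where U': "a \<in> U'" "local_invariant br (f i') U'" using li sc2(1) by blast
        have "pair x (br (dF Q x) (dF P x)) = 0 \<and> pair a (br (dF Q x) (dF P x)) = 0"
          using AB[OF U'(2,1) si(1)] sc2 si dsi[OF si(1)] by simp
        then show ?thesis using pair_anti by (metis neg_equal_0_iff_equal)
      next
        case si2
        show ?thesis using BB[OF si(1) si2(1)] si si2 dsi[OF si(1)] dsi[OF si2(1)] by simp
      qed
    qed
  qed
  have alg: "shifts_si_alg br f m a = gen_alg G" unfolding shifts_si_alg_def G_def by simp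
  show ?thesis
  proof (intro ballI conjI allI)
    fix P Q x assume P: "P \<in> shifts_si_alg br f m a" and Q: "Q \<in> shifts_si_alg br f m a"
    show "lie_poisson br P Q x = 0" unfolding lie_poisson_def
      using comm_all[OF Gd _ P[unfolded alg] Q[unfolded alg], of "\<lambda>x. x"] G0 by blast
    show "frozen_bracket br a P Q x = 0" unfolding frozen_bracket_def
      using comm_all[OF Gd _ P[unfolded alg] Q[unfolded alg], of "\<lambda>x. a"] G0 by blast
  qed
qed


end
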